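(* The map $R$ has infinite topological entropy: $h(R)=\infty$.
   Context: Define $\rho$ on binary words: for $b=b_1b_2\dots$, $\rho(b)$ is obtained by deleting every digit $b_n=0$ and replacing every $b_n=1$ by $0$ if $n$ is odd and by $1$ if $n$ is even. For $x\in(0,1]$ let $\beta(x)$ be the unique binary expansion of $x$ with infinitely many $1$'s. Define $R:[0,1]\to[0,1]$ by $R(0)=2/3$ and, for $x\in(0,1]$, $R(x)=\sum_{n\ge1}c_n2^{-n}$ where $c=\rho(\beta(x))$. The topological entropy (Bowen–Dinaburg definition, used here for a not necessarily continuous map) is $h(R)=\lim_{\varepsilon\to0}\limsup_{n\to\infty}\frac1n\log r(n,\varepsilon)$, where $r(n,\varepsilon)$ is the maximal cardinality of a subset of $[0,1]$ whose distinct points are at distance $\ge\varepsilon$ in the metric $d_n(x,y)=\max_{0\le i\le n}|R^i(x)-R^i(y)|$. *)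

theory Defs
  imports "HOL-Analysis.Analysis" "HOL-Library.Infinite_Set" "HOL-Library.Liminf_Limsup"
begin

text \<open>Binary words b = b_1 b_2 ... are modelled as nat => bool, with index 0 unused (False).\<close>

definition beta :: "real \<Rightarrow> (nat \<Rightarrow> bool)" where
  "beta x = (THE b. \<not> b 0 \<and> infinite {n. b n} \<and>
                     (\<lambda>n. (if b n then 1 else 0) / (2::real) ^ n) sums x)"

definition rho :: "(nat \<Rightarrow> bool) \<Rightarrow> (nat \<Rightarrow> bool)" where
  "rho b = (\<lambda>k. if k = 0 then False
                 else even (enumerate {n. 1 \<le> n \<and> b n} (k - 1)))"

definition R :: "real \<Rightarrow> real" where
  "R x = (if x = 0 then 2/3
          else (\<Sum>k. (if rho (beta x) k then 1 else 0) / (2::real) ^ k))"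

text \<open>Bowen--Dinaburg entropy of a (not necessarily continuous) map T on [0,1].\<close>
definition dn :: "(real \<Rightarrow> real) \<Rightarrow> nat \<Rightarrow> real \<Rightarrow> real \<Rightarrow> real" where
  "dn T n x y = Max ((\<lambda>i. \<bar>(T ^^ i) x - (T ^^ i) y\<bar>) ` {0..n})"

definition separated :: "(real \<Rightarrow> real) \<Rightarrow> nat \<Rightarrow> real \<Rightarrow> real set \<Rightarrow> bool" where
  "separated T n \<epsilon> S \<longleftrightarrow> S \<subseteq> {0..1} \<and> (\<forall>x\<in>S. \<forall>y\<in>S. x \<noteq> y \<longrightarrow> \<epsilon> \<le> dn T n x y)"

definition r_sep :: "(real \<Rightarrow> real) \<Rightarrow> nat \<Rightarrow> real \<Rightarrow> ereal" where
  "r_sep T n \<epsilon> = Sup {ereal (real (card S)) | S. finite S \<and> separated T n \<epsilon> S}"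

definition log_growth :: "(real \<Rightarrow> real) \<Rightarrow> real \<Rightarrow> nat \<Rightarrow> ereal" where
  "log_growth T \<epsilon> n = (if r_sep T n \<epsilon> = \<infinity> then \<infinity>
                        else ereal (ln (real_of_ereal (r_sep T n \<epsilon>)) / real n))"

definition top_entropy :: "(real \<Rightarrow> real) \<Rightarrow> ereal" where
  "top_entropy T = Lim (at_right (0::real)) (\<lambda>\<epsilon>. limsup (log_growth T \<epsilon>))"

end

theory Submission
  imports Defs
begin


definition val :: "(nat \<Rightarrow> bool) \<Rightarrow> real" where
  "val b = (\<Sum>n. (if b n then 1 else 0) / (2::real) ^ n)"

lemma summ: "summable (\<lambda>n. (if b n then 1 else 0) / (2::real) ^ n)"
proof (rule summable_comparison_test[where g="\<lambda>n. (1/2::real)^n"])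
  show "summable (\<lambda>n. (1/2::real)^n)" by (rule summable_geometric) simp
qed (auto simp: power_one_over)

lemma summ_shift: "summable (\<lambda>n. (if b (n+k) then 1 else 0) / (2::real) ^ (n+k))"
  using summ[of b] by (subst summable_iff_shift) 

lemma tail_le: "(\<Sum>n. (if b (n+k) then 1 else 0) / (2::real) ^ (n+k)) \<le> 2 / 2^k"
proof -
  have s: "(\<lambda>n. (1/2::real)^n / 2^k) sums (2 / 2^k)"
    using sums_divide[OF geometric_sums[of "1/2::real"], of "2^k"] by simp
  have "(\<Sum>n. (if b (n+k) then 1 else 0) / (2::real) ^ (n+k)) \<le> (\<Sum>n. (1/2::real)^n / 2^k)"
  proof (rule suminf_le)
    fix n
    have "(1::real) / 2^(n+k) = (1/2)^n / 2^k" by (simp add: power_add power_one_over)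
    then show "(if b (n+k) then 1 else 0) / (2::real) ^ (n+k) \<le> (1/2::real)^n / 2^k"
      by (cases "b (n+k)") auto
  qed (use summ_shift[of b k] sums_summable[OF s] in auto)
  also have "\<dots> = 2/2^k" using sums_unique[OF s] by simp
  finally show ?thesis .
qed

lemma val_split: "val b = (\<Sum>n. (if b (n+k) then 1 else 0) / (2::real) ^ (n+k))
   + (\<Sum>n<k. (if b n then 1 else 0) / (2::real) ^ n)"
  unfolding val_def by (rule suminf_split_initial_segment[OF summ])

lemma val_le: assumes "\<forall>n<s. \<not> b n" shows "val b \<le> 2 / 2^s"
  using val_split[of b s] tail_le[of b s] assms by simp

lemma val_ge: assumes "b s" shows "1 / 2^s \<le> val b"
proof -
  have "(\<Sum>n\<in>{s}. (if b n then 1 else 0) / (2::real) ^ n) \<le> val b"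
    unfolding val_def by (rule sum_le_suminf[OF summ]) auto
  thus ?thesis using assms by simp
qed

lemma val_nonneg: "0 \<le> val b"
  unfolding val_def by (rule suminf_nonneg[OF summ]) auto

lemma tail_pos: assumes "b (m + k)" shows "0 < (\<Sum>n. (if b (n+k) then 1 else 0) / (2::real) ^ (n+k))"
  by (rule suminf_pos2[OF summ_shift, of _ _ m]) (auto simp: assms)

lemma val_lt:
  assumes "\<forall>n<m. b n = b' n" "b m" "\<not> b' m" "infinite {n. b n}"
  shows "val b' < val b"
proof -
  obtain j where j: "b j" "j > m" using assms(4)
    unfolding infinite_nat_iff_unbounded by auto
  have eq: "(\<Sum>n<m. (if b n then 1 else 0) / (2::real) ^ n) = (\<Sum>n<m. (if b' n then 1 else 0) / (2::real) ^ n)"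
    using assms(1) by (intro sum.cong) auto
  have "0 < (\<Sum>n. (if b (n+Suc m) then 1 else 0) / (2::real) ^ (n+Suc m))"
    using j by (intro tail_pos[of _ "j - Suc m"]) auto
  moreover have "(\<Sum>n. (if b' (n+Suc m) then 1 else 0) / (2::real) ^ (n+Suc m)) \<le> 2/2^Suc m"
    by (rule tail_le)
  ultimately show ?thesis
    using val_split[of b "Suc m"] val_split[of b' "Suc m"] eq assms(2,3) by simp
qed

lemma val_inj:
  assumes "infinite {n. b n}" "infinite {n. b' n}" "val b = val b'"
  shows "b = b'"
proof (rule ccontr)
  assume "b \<noteq> b'"
  then have ex: "\<exists>n. b n \<noteq> b' n" by auto
  define m where "m = (LEAST n. b n \<noteq> b' n)"
  have d: "b m \<noteq> b' m" unfolding m_def using ex by (rule LeastI_ex)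
  have e: "\<forall>n<m. b n = b' n" unfolding m_def using not_less_Least by blast
  show False
  proof (cases "b m")
    case True
    then show ?thesis using val_lt[OF e True] d assms by auto
  next
    case False
    then show ?thesis using val_lt[of m b' b] e d assms by auto
  qed
qed

lemma beta_val: assumes "\<not> b 0" "infinite {n. b n}" shows "beta (val b) = b"
  unfolding beta_def
proof (rule the_equality)
  show "\<not> b 0 \<and> infinite {n. b n} \<and> (\<lambda>n. (if b n then 1 else 0) / (2::real) ^ n) sums val b"
    using assms summ unfolding val_def by (auto intro: summable_sums)
next
  fix b' assume "\<not> b' 0 \<and> infinite {n. b' n} \<and> (\<lambda>n. (if b' n then 1 else 0) / (2::real) ^ n) sums val b"
  then have h: "\<not> b' 0" "infinite {n. b' n}" "(\<lambda>n. (if b' n then 1 else 0) / (2::real) ^ n) sums val b" by auto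
  have "val b' = val b" unfolding val_def[of b'] using sums_unique[OF h(3)] by simp
  then show "b' = b" using val_inj[of b' b] assms h by blast
qed

lemma R_val: assumes "\<not> b 0" "infinite {n. b n}" "b s" shows "R (val b) = val (rho b)"
proof -
  have p: "0 < 1/(2::real)^s" by simp
  have "0 < val b" using val_ge[of b s, OF assms(3)] p by linarith
  then have "val b \<noteq> 0" by simp
  then show ?thesis unfolding R_def using beta_val[OF assms(1,2)] by (simp add: val_def)
qed


lemma enumerate_range:
  fixes e :: "nat \<Rightarrow> nat" assumes "strict_mono e" shows "enumerate (range e) k = e k"
proof (induction k)
  case 0
  have "\<And>j. e 0 \<le> e j" using assms by (simp add: strict_mono_less_eq)
  then show ?case by (auto simp: enumerate_0 intro!: Least_equality)
next
  case (Suc k)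
  have inf: "infinite (range e)" using assms strict_mono_imp_inj_on range_inj_infinite by blast
  have "(LEAST s. s \<in> range e \<and> e k < s) = e (Suc k)"
  proof (rule Least_equality)
    show "e (Suc k) \<in> range e \<and> e k < e (Suc k)" using assms by (auto simp: strict_mono_def)
  next
    fix y assume "y \<in> range e \<and> e k < y"
    then obtain j where "y = e j" "e k < e j" by auto
    then have "k < j" using assms by (simp add: strict_mono_less)
    then show "e (Suc k) \<le> y" using \<open>y = e j\<close> assms by (simp add: strict_mono_less_eq)
  qed
  then show ?case using enumerate_Suc''[OF inf, of k] Suc by simp
qed

definition E :: "nat \<Rightarrow> (nat \<Rightarrow> bool) \<Rightarrow> nat \<Rightarrow> nat" where
  "E s c k = (if k = 0 then s else s + 2*k - (if c (Suc k) then 1 else 0))"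

definition W :: "nat \<Rightarrow> (nat \<Rightarrow> bool) \<Rightarrow> nat \<Rightarrow> bool" where
  "W s c = (\<lambda>n. n \<in> range (E s c))"

lemma E_mono: "strict_mono (E s c)"
  by (rule strict_monoI_Suc) (auto simp: E_def)

lemma E_ge: "s \<le> E s c k"
  by (auto simp: E_def)

lemma W_inf: "infinite {n. W s c n}"
  using E_mono[of s c] strict_mono_imp_inj_on range_inj_infinite unfolding W_def by auto

lemma W_lt: "n < s \<Longrightarrow> \<not> W s c n"
  unfolding W_def
proof
  assume "n < s" "n \<in> range (E s c)"
  then obtain k where "n = E s c k" by auto
  with E_ge[of s c k] \<open>n < s\<close> show False by simp
qed

lemma W_s: "W s c s"
  unfolding W_def by (rule range_eqI[of _ _ 0]) (simp add: E_def)

lemma rho_W: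
  assumes "odd s" "\<not> c 0" "\<not> c 1"
  shows "rho (W s c) = c"
proof
  fix k
  have s1: "s \<ge> 1" using assms(1) by (cases s) auto
  have set: "{n. 1 \<le> n \<and> W s c n} = range (E s c)"
    using E_ge[of s c] s1 unfolding W_def by (auto intro: order_trans)
  show "rho (W s c) k = c k"
  proof (cases "k \<le> 1")
    case True
    then show ?thesis using assms unfolding rho_def set enumerate_range[OF E_mono]
      by (cases k) (auto simp: E_def)
  next
    case False
    then obtain j where k: "k = Suc j" "j \<ge> 1" by (cases k) auto
    have "E s c j = s + 2*j - (if c k then 1 else 0)" using k by (simp add: E_def)
    then show ?thesis using assms(1) k unfolding rho_def set enumerate_range[OF E_mono]
      by (cases "c k") auto
  qed
qed

definition good :: "(nat \<Rightarrow> bool) \<Rightarrow> bool" where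
  "good c \<longleftrightarrow> \<not> c 0 \<and> \<not> c 1 \<and> infinite {n. c n}"

lemma R_W: assumes "odd s" "good c" shows "R (val (W s c)) = val c"
proof -
  have "s \<ge> 1" using assms(1) by (cases s) auto
  then have "\<not> W s c 0" using W_lt by auto
  then show ?thesis using R_val[of "W s c" s] W_inf W_s rho_W assms unfolding good_def by auto
qed

lemma good_W: "s \<ge> 2 \<Longrightarrow> good (W s c)"
  unfolding good_def using W_lt W_inf by auto

fun wd :: "nat list \<Rightarrow> nat \<Rightarrow> bool" where
  "wd [] = (\<lambda>k. 2 \<le> k)"
| "wd (a # as) = W (2*a+3) (wd as)"

lemma good_wd: "good (wd xs)"
proof (cases xs)
  case Nil
  have "infinite {k::nat. 2 \<le> k}" by (simp add: infinite_Ici atLeast_def[symmetric])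
  then show ?thesis using Nil by (simp add: good_def)
next
  case (Cons a as)
  then show ?thesis by (simp add: good_W)
qed

lemma iter_wd: "i \<le> length xs \<Longrightarrow> (R ^^ i) (val (wd xs)) = val (wd (drop i xs))"
proof (induction xs arbitrary: i)
  case Nil
  then show ?case by simp
next
  case (Cons a as)
  show ?case
  proof (cases i)
    case 0
    then show ?thesis by simp
  next
    case (Suc j)
    have "(R ^^ i) (val (wd (a # as))) = (R ^^ j) (R (val (wd (a # as))))"
      using Suc by (simp only: funpow_Suc_right comp_apply)
    also have "R (val (wd (a # as))) = val (wd as)" using R_W good_wd by simp
    finally show ?thesis using Cons Suc by simp
  qed
qed

lemma sep_W:
  assumes "a < m" "a' < m" "a \<noteq> a'"
  shows "1 / 2^(2*m+2) \<le> \<bar>val (W (2*a+3) c) - val (W (2*a'+3) c')\<bar>"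
proof -
  have key: "1 / 2^(2*m+2) \<le> val (W (2*a+3) c) - val (W (2*a'+3) c')"
    if "a < a'" "a < m" for a a' c c'
  proof -
    have g: "1/2^(2*a+3) \<le> val (W (2*a+3) c)" by (rule val_ge) (rule W_s)
    have l: "val (W (2*a'+3) c') \<le> 2/2^(2*a'+3)" by (rule val_le) (use W_lt in blast)
    have "(2::real)/2^(2*a'+3) \<le> 2/2^(2*a+5)"
      using that by (intro divide_left_mono power_increasing) auto
    also have "\<dots> = (1/2^(2*a+3)) / 2" by (simp add: power_add field_simps)
    finally have h: "(2::real)/2^(2*a'+3) \<le> (1/2^(2*a+3)) / 2" .
    have e: "(1::real)/2^(2*a+4) = 1/2^(2*a+3) - (1/2^(2*a+3))/2" by (simp add: power_add field_simps)
    have "val (W (2*a+3) c) - val (W (2*a'+3) c') \<ge> 1/2^(2*a+4)"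
      using g l h unfolding e by linarith
    moreover have "(1::real)/2^(2*m+2) \<le> 1/2^(2*a+4)"
      using that by (intro divide_left_mono power_increasing) auto
    ultimately show ?thesis by linarith
  qed
  show ?thesis
  proof (cases "a < a'")
    case True then show ?thesis using key[OF True assms(1), of c c'] by linarith
  next
    case False then have lt: "a' < a" using assms by auto
    then show ?thesis using key[OF lt assms(2), of c' c] by linarith
  qed
qed



definition L :: "nat \<Rightarrow> nat \<Rightarrow> nat list set" where
  "L m n = {xs. set xs \<subseteq> {..<m} \<and> length xs = Suc n}"

lemma dn_ge: "i \<le> n \<Longrightarrow> \<bar>(T ^^ i) x - (T ^^ i) y\<bar> \<le> dn T n x y"
  unfolding dn_def by (rule Max_ge) auto

lemma dist_pts:
  assumes "xs \<in> L m n" "ys \<in> L m n" "xs \<noteq> ys"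
  shows "1/2^(2*m+2) \<le> dn R n (val (wd xs)) (val (wd ys))"
proof -
  have len: "length xs = Suc n" "length ys = Suc n" using assms by (auto simp: L_def)
  have "\<exists>i<Suc n. xs ! i \<noteq> ys ! i"
  proof (rule ccontr)
    assume "\<not> (\<exists>i<Suc n. xs ! i \<noteq> ys ! i)"
    then have "xs = ys" using len by (intro nth_equalityI) auto
    with assms(3) show False by simp
  qed
  then obtain i where i: "i < Suc n" "xs ! i \<noteq> ys ! i" by blast
  have "xs ! i \<in> set xs" "ys ! i \<in> set ys" using i len by simp_all
  then have m: "xs ! i < m" "ys ! i < m" using assms(1,2) unfolding L_def by auto
  have "(R ^^ i) (val (wd xs)) = val (W (2*(xs!i)+3) (wd (drop (Suc i) xs)))"
  proof -
    have d: "drop i xs = xs!i # drop (Suc i) xs" using Cons_nth_drop_Suc[of i xs] i len by simp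
    show ?thesis using iter_wd[of i xs] i len unfolding d by simp
  qed
  moreover have "(R ^^ i) (val (wd ys)) = val (W (2*(ys!i)+3) (wd (drop (Suc i) ys)))"
  proof -
    have d: "drop i ys = ys!i # drop (Suc i) ys" using Cons_nth_drop_Suc[of i ys] i len by simp
    show ?thesis using iter_wd[of i ys] i len unfolding d by simp
  qed
  ultimately have "1/2^(2*m+2) \<le> \<bar>(R ^^ i) (val (wd xs)) - (R ^^ i) (val (wd ys))\<bar>"
    using sep_W[OF m i(2)] by simp
  also have "\<dots> \<le> dn R n (val (wd xs)) (val (wd ys))" using i by (intro dn_ge) auto
  finally show ?thesis .
qed

lemma r_sep_ge:
  assumes "\<epsilon> \<le> 1/2^(2*m+2)"
  shows "ereal (real (m ^ Suc n)) \<le> r_sep R n \<epsilon>"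
proof -
  define S where "S = (\<lambda>xs. val (wd xs)) ` L m n"
  have fin: "finite (L m n)" unfolding L_def by (rule finite_lists_length_eq) simp
  have cardL: "card (L m n) = m ^ Suc n" unfolding L_def by (subst card_lists_length_eq) auto
  have inj: "inj_on (\<lambda>xs. val (wd xs)) (L m n)"
  proof (rule inj_onI)
    fix xs ys assume h: "xs \<in> L m n" "ys \<in> L m n" "val (wd xs) = val (wd ys)"
    have dn0: "dn R n x x = 0" for x unfolding dn_def by (simp add: image_constant_conv)
    show "xs = ys"
    proof (rule ccontr)
      assume "xs \<noteq> ys"
      then have "1/2^(2*m+2) \<le> dn R n (val (wd xs)) (val (wd ys))" using dist_pts h(1,2) by blast
      then have "1/2^(2*m+2) \<le> (0::real)" using h(3) dn0 by simp
      moreover have "(0::real) < 1/2^(2*m+2)" by simp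
      ultimately show False by linarith
    qed
  qed
  have cardS: "card S = m ^ Suc n" unfolding S_def using card_image[OF inj] cardL by simp
  have sub: "S \<subseteq> {0..1}"
  proof
    fix x assume "x \<in> S"
    then obtain xs where x: "x = val (wd xs)" unfolding S_def by auto
    have "\<not> wd xs 0" using good_wd[of xs] by (simp add: good_def)
    then have "val (wd xs) \<le> 2/2^1" by (intro val_le) auto
    then show "x \<in> {0..1}" using x val_nonneg by auto
  qed
  have "separated R n \<epsilon> S"
    unfolding separated_def
  proof (intro conjI ballI impI)
    show "S \<subseteq> {0..1}" by (rule sub)
    fix x y assume "x \<in> S" "y \<in> S" "x \<noteq> y"
    then obtain xs ys where "xs \<in> L m n" "ys \<in> L m n" "x = val (wd xs)" "y = val (wd ys)"
      unfolding S_def by auto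
    moreover then have "xs \<noteq> ys" using \<open>x \<noteq> y\<close> by auto
    ultimately have "1/2^(2*m+2) \<le> dn R n x y" using dist_pts by blast
    then show "\<epsilon> \<le> dn R n x y" using assms by linarith
  qed
  then have mem: "ereal (real (card S)) \<in> {ereal (real (card S)) | S. finite S \<and> separated R n \<epsilon> S}"
    using fin S_def by blast
  then show ?thesis unfolding r_sep_def using Sup_upper[OF mem] cardS by simp
qed

lemma lg_ge:
  assumes "\<epsilon> \<le> 1/2^(2*m+2)" "m \<ge> 1" "n \<ge> 1"
  shows "ereal (ln (real m)) \<le> log_growth R \<epsilon> n"
proof (cases "r_sep R n \<epsilon> = \<infinity>")
  case True then show ?thesis by (simp add: log_growth_def)
next
  case False
  have ge: "ereal (real (m ^ Suc n)) \<le> r_sep R n \<epsilon>" by (rule r_sep_ge[OF assms(1)])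
  then obtain r where r: "r_sep R n \<epsilon> = ereal r" using False
    by (cases "r_sep R n \<epsilon>") auto
  have rge: "real m ^ Suc n \<le> r" using ge r by simp
  have pos: "0 < real m ^ Suc n" using assms by simp
  have "ln (real m ^ Suc n) \<le> ln r" using rge pos by simp
  moreover have "ln (real m ^ Suc n) = real (Suc n) * ln (real m)" by (rule ln_realpow)
  ultimately have "real (Suc n) * ln (real m) \<le> ln r" by simp
  moreover have "0 \<le> ln (real m)" using assms by simp
  ultimately have "real n * ln (real m) \<le> ln r"
  proof -
    have "real n * ln (real m) \<le> real (Suc n) * ln (real m)"
      using \<open>0 \<le> ln (real m)\<close> by (intro mult_right_mono) auto
    then show ?thesis using \<open>real (Suc n) * ln (real m) \<le> ln r\<close> by linarith
  qed
  then have "ln (real m) \<le> ln r / real n" using assms by (simp add: field_simps)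
  then show ?thesis using False r by (simp add: log_growth_def)
qed

lemma limsup_ge:
  assumes "\<epsilon> \<le> 1/2^(2*m+2)" "m \<ge> 1"
  shows "ereal (ln (real m)) \<le> limsup (log_growth R \<epsilon>)"
proof (rule le_Limsup)
  show "\<forall>\<^sub>F n in sequentially. ereal (ln (real m)) \<le> log_growth R \<epsilon> n"
    by (rule eventually_mono[OF eventually_ge_at_top[of 1]]) (use lg_ge[OF assms] in auto)
qed simp

theorem proposition6p11:
  shows "top_entropy R = \<infinity>"
proof -
  have "((\<lambda>\<epsilon>. limsup (log_growth R \<epsilon>)) \<longlongrightarrow> \<infinity>) (at_right (0::real))"
  proof (subst tendsto_PInfty, intro allI)
    fix r :: real
    define m where "m = nat \<lceil>exp r\<rceil> + 1"
    have m1: "m \<ge> 1" unfolding m_def by simp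
    have "exp r < real m" unfolding m_def by linarith
    then have "ln (exp r) < ln (real m)" using m1 by (subst ln_less_cancel_iff) auto
    then have lr: "r < ln (real m)" by simp
    show "\<forall>\<^sub>F \<epsilon> in at_right 0. ereal r < limsup (log_growth R \<epsilon>)"
      unfolding eventually_at_right_field
    proof (intro exI conjI allI impI)
      show "(0::real) < 1/2^(2*m+2)" by simp
      fix \<epsilon> :: real assume "0 < \<epsilon>" "\<epsilon> < 1/2^(2*m+2)"
      then have "ereal (ln (real m)) \<le> limsup (log_growth R \<epsilon>)"
        using limsup_ge[OF _ m1] by simp
      moreover have "ereal r < ereal (ln (real m))" using lr by simp
      ultimately show "ereal r < limsup (log_growth R \<epsilon>)"
        using order_less_le_trans by blast
    qed
  qed
  then show ?thesis unfolding top_entropy_def by (intro tendsto_Lim) auto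
qed

end
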